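(* Consider the repeated service game described in the context, with $t>0$, $\tau\in(0,t)$, $c>0$, $d\in(0,1)$, $w\in(0,1)$, and a strictly decreasing utility $\Gamma:[0,1]\to(0,\infty)$. Suppose the price $p$ satisfies $$p=\Gamma(d)\left(1-\frac{\tau}{t}\right)+\frac{c}{1-d}\,\frac{\tau}{t}.$$ Then the cooperation conditions hold if and only if $$w\ \ge\ \frac{c}{(1-d)\Gamma(d)}.$$
   Context: A service provider (SP) and a client interact in rounds of duration $t>0$. The parameters are: trial time $\tau$, SP cost per unit time $c$, price per unit time $p$, channel outage probability $d$, continuation probability (cooperation willingness) $w$, and a client utility function $\Gamma$. When both players use COOP, the long-term payoffs are $$\Pi_s^{\mathrm C}=\frac{(1-d)(p-c)t-dc\tau}{1-(1-d)w},\qquad \Pi_c^{\mathrm C}=\frac{(1-d)(\Gamma(d)-p)t+d\Gamma(d)\tau}{1-(1-d)w}.$$ For an integer $j\ge 2$, the long-term payoff of a player using the defect-and-recover-after-$j$-rounds strategy JDEF$_j$ against COOP is: - for the SP, $$\Pi_s^{(j)}=\frac{(1-d)\big(pt-c\tau-w^{j-1}c(t-\tau)\big)-dc\tau}{1-(1-d)w^{j}};$$ - for the client, $$\Pi_c^{(j)}=\frac{(1-d)\big(\Gamma(d)\tau+w^{j-1}(\Gamma(d)(t-\tau)-pt)\big)+d\Gamma(d)\tau}{1-(1-d)w^{j}}.$$ The cooperation conditions hold when both of the following hold: - $\Pi_s^{\mathrm C}\ge\Pi_s^{(j)}$ for all integers $j\ge2$; - $\Pi_c^{\mathrm C}\ge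 \Pi_c^{(j)}$ for all integers $j\ge 2$. *)

theory Defs
  imports Complex_Main
begin

text \<open>Parameters:
  t round duration, tau trial time, c SP cost, p price, d outage probability,
  w continuation probability, G the client utility function (Gamma).\<close>

definition Pi_s_C :: "real \<Rightarrow> real \<Rightarrow> real \<Rightarrow> real \<Rightarrow> real \<Rightarrow> real \<Rightarrow> real" where
  "Pi_s_C t tau c p d w = ((1 - d) * (p - c) * t - d * c * tau) / (1 - (1 - d) * w)"

definition Pi_c_C :: "real \<Rightarrow> real \<Rightarrow> (real \<Rightarrow> real) \<Rightarrow> real \<Rightarrow> real \<Rightarrow> real \<Rightarrow> real" where
  "Pi_c_C t tau G p d w = ((1 - d) * (G d - p) * t + d * G d * tau) / (1 - (1 - d) * w)"

definition Pi_s_J :: "nat \<Rightarrow> real \<Rightarrow> real \<Rightarrow> real \<Rightarrow> real \<Rightarrow> real \<Rightarrow> real \<Rightarrow> real" where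
  "Pi_s_J j t tau c p d w =
     ((1 - d) * (p * t - c * tau - w ^ (j - 1) * c * (t - tau)) - d * c * tau)
     / (1 - (1 - d) * w ^ j)"

definition Pi_c_J :: "nat \<Rightarrow> real \<Rightarrow> real \<Rightarrow> (real \<Rightarrow> real) \<Rightarrow> real \<Rightarrow> real \<Rightarrow> real \<Rightarrow> real" where
  "Pi_c_J j t tau G p d w =
     ((1 - d) * (G d * tau + w ^ (j - 1) * (G d * (t - tau) - p * t)) + d * G d * tau)
     / (1 - (1 - d) * w ^ j)"

definition cooperation_conditions ::
  "real \<Rightarrow> real \<Rightarrow> real \<Rightarrow> real \<Rightarrow> real \<Rightarrow> real \<Rightarrow> (real \<Rightarrow> real) \<Rightarrow> bool" where
  "cooperation_conditions t tau c p d w G \<longleftrightarrow>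
     (\<forall>j::nat. j \<ge> 2 \<longrightarrow> Pi_s_C t tau c p d w \<ge> Pi_s_J j t tau c p d w) \<and>
     (\<forall>j::nat. j \<ge> 2 \<longrightarrow> Pi_c_C t tau G p d w \<ge> Pi_c_J j t tau G p d w)"

end

theory Submission
  imports Defs
begin

lemma key:
  fixes e w q K g c :: real
  assumes "0 < e" "e < 1" "0 < w" "w < 1" "0 < q" "q < 1" "K > 0"
  shows "K*(g-q*c)/(1-e*w*q) \<le> K*(g-c)/(1-e*w) \<longleftrightarrow> c \<le> g*e*w"
proof -
  have "e*w < 1*w" using assms by (intro mult_strict_right_mono) auto
  hence a1: "e*w < 1" using assms(4) by linarith
  have "e*w*q < e*w*1" using assms by (intro mult_strict_left_mono) auto
  hence a2: "e*w*q < 1" using a1 by simp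
  have "K*(g-q*c)/(1-e*w*q) \<le> K*(g-c)/(1-e*w) \<longleftrightarrow>
        K*(g-q*c)*(1-e*w) \<le> K*(g-c)*(1-e*w*q)"
    using a1 a2 by (simp add: divide_simps)
  also have "\<dots> \<longleftrightarrow> (g-q*c)*(1-e*w) \<le> (g-c)*(1-e*w*q)"
    using assms by (simp add: mult.assoc)
  also have "\<dots> \<longleftrightarrow> (1-q)*c \<le> (1-q)*(g*e*w)"
    by (simp add: algebra_simps)
  also have "\<dots> \<longleftrightarrow> c \<le> g*e*w" using assms by (simp add: mult.assoc)
  finally show ?thesis .
qed

theorem corollary4:
  fixes t tau c p d w :: real and G :: "real \<Rightarrow> real"
  assumes "t > 0" and "0 < tau" and "tau < t" and "c > 0"
    and "0 < d" and "d < 1" and "0 < w" and "w < 1"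
    and "\<forall>x\<in>{0..1}. G x > 0"
    and "\<forall>x\<in>{0..1}. \<forall>y\<in>{0..1}. x < y \<longrightarrow> G y < G x"
    and "p = G d * (1 - tau / t) + c / (1 - d) * (tau / t)"
  shows "cooperation_conditions t tau c p d w G \<longleftrightarrow> w \<ge> c / ((1 - d) * G d)"
proof -
  define g where "g = G d"
  define e where "e = 1 - d"
  have gp: "g > 0" using assms(5,6,9) unfolding g_def by auto
  have ep: "0 < e" "e < 1" using assms(5,6) unfolding e_def by auto
  have "p*t = G d*(1-tau/t)*t + c/(1-d)*((tau/t)*t)" unfolding assms(11) by (simp only: distrib_right mult.assoc)
  also have "\<dots> = g*(t-tau) + c/e*tau"
  proof -
    have h1: "(1-tau/t)*t = t - tau" "tau/t*t = tau" using assms(1) by (auto simp: field_simps)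
    show ?thesis unfolding g_def e_def using h1 by (simp only: mult.assoc)
  qed
  finally have pt: "p*t = g*(t-tau) + c/e*tau" .
  have ept: "e*p*t = e*g*(t-tau) + c*tau"
  proof -
    have "e*p*t = e*(p*t)" by (simp only: mult.assoc)
    also have "\<dots> = e*g*(t-tau) + c*tau" unfolding pt using ep by (simp add: field_simps)
    finally show ?thesis .
  qed
  have sC: "Pi_s_C t tau c p d w = (e*(t-tau))*(g-c)/(1-e*w)"
    unfolding Pi_s_C_def e_def[symmetric]
    using ept unfolding e_def by (simp add: algebra_simps)
  have cC: "Pi_c_C t tau G p d w = tau*(g-c)/(1-e*w)"
    unfolding Pi_c_C_def e_def[symmetric] g_def[symmetric]
    using ept unfolding e_def by (simp add: algebra_simps)
  have sJ: "Pi_s_J j t tau c p d w = (e*(t-tau))*(g-w^(j-1)*c)/(1-e*w*w^(j-1))"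
    if "j \<ge> 2" for j
  proof -
    have "w^j = w*w^(j-1)" using that by (metis Suc_diff_1 less_le_trans pos2 power_Suc)
    thus ?thesis
      unfolding Pi_s_J_def using ept unfolding e_def by (simp add: algebra_simps)
  qed
  have cJ: "Pi_c_J j t tau G p d w = tau*(g-w^(j-1)*c)/(1-e*w*w^(j-1))"
    if "j \<ge> 2" for j
  proof -
    have wj: "w^j = w*w^(j-1)" using that by (metis Suc_diff_1 less_le_trans pos2 power_Suc)
    have "(1-d)*(g*tau + w^(j-1)*(g*(t-tau) - p*t)) + d*g*tau
          = g*tau + w^(j-1)*((1-d)*g*(t-tau) - (1-d)*p*t)" by (simp add: algebra_simps)
    also have "\<dots> = tau*(g-w^(j-1)*c)" using ept unfolding e_def by (simp add: algebra_simps)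
    finally have n: "(1-d)*(g*tau + w^(j-1)*(g*(t-tau) - p*t)) + d*g*tau = tau*(g-w^(j-1)*c)" .
    show ?thesis
      unfolding Pi_c_J_def g_def[symmetric] e_def using wj n by (simp add: mult.assoc)
  qed
  have q: "0 < w^(j-1)" "w^(j-1) < 1" if "j \<ge> 2" for j
    using assms(7,8) that by (auto intro: power_less_one_iff[THEN iffD2])
  have K: "e*(t-tau) > 0" using ep assms(3) by simp
  have goal: "c / ((1 - d) * G d) \<le> w \<longleftrightarrow> c \<le> g*e*w"
    using gp ep unfolding g_def[symmetric] e_def[symmetric] by (simp add: divide_simps mult.commute mult.left_commute)
  show ?thesis
    unfolding cooperation_conditions_def goal
  proof
    assume h: "(\<forall>j::nat. j \<ge> 2 \<longrightarrow> Pi_s_C t tau c p d w \<ge> Pi_s_J j t tau c p d w) \<and>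
     (\<forall>j::nat. j \<ge> 2 \<longrightarrow> Pi_c_C t tau G p d w \<ge> Pi_c_J j t tau G p d w)"
    hence "Pi_s_C t tau c p d w \<ge> Pi_s_J 2 t tau c p d w" by simp
    thus "c \<le> g*e*w" unfolding sC sJ[OF order_refl]
      using key[OF ep assms(7,8) q[OF order_refl] K] by simp
  next
    assume h: "c \<le> g*e*w"
    have s: "Pi_s_C t tau c p d w \<ge> Pi_s_J j t tau c p d w" if j: "j \<ge> 2" for j
      unfolding sC sJ[OF j] using key[OF ep assms(7,8) q[OF j] K] h by simp
    have c: "Pi_c_C t tau G p d w \<ge> Pi_c_J j t tau G p d w" if j: "j \<ge> 2" for j
      unfolding cC cJ[OF j] using key[OF ep assms(7,8) q[OF j] assms(2)] h by simp
    show "(\<forall>j::nat. j \<ge> 2 \<longrightarrow> Pi_s_C t tau c p d w \<ge> Pi_s_J j t tau c p d w) \<and>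
     (\<forall>j::nat. j \<ge> 2 \<longrightarrow> Pi_c_C t tau G p d w \<ge> Pi_c_J j t tau G p d w)"
      using s c by blast
  qed
qed

end
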